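(* Let $N\ge 3$, $N=2g+1$ or $N=2g+2$ with $g\ge1$, and let $(v_n)$ be a solution of the $N$-periodic dressing chain with transition matrix $T(\lambda)=\begin{pmatrix}A&B\\C&D\end{pmatrix}$, $Q(\lambda)=\det T(\lambda)$, and $P(\lambda)=\operatorname{Tr}T(\lambda)$ written as $P(\lambda)=I_0\lambda^g+I_1\lambda^{g-1}+\cdots+I_g$ if $N=2g+1$ and $P(\lambda)=2\lambda^{g+1}+I_0\lambda^g+I_1\lambda^{g-1}+\cdots+I_g$ if $N=2g+2$. Assume the zeros $\lambda_1,\dots,\lambda_g$ of $B$ are pairwise distinct and $z_j=A(\lambda_j)\neq0$. Regard $\lambda_1,\dots,\lambda_g,z_1,\dots,z_g$ as independent variables and define $$H=\sum_{j=1}^g\frac{z_j+Q(\lambda_j)z_j^{-1}-I_0\lambda_j^g}{B'(\lambda_j)}\quad (N=2g+1),\qquad H=\sum_{j=1}^g\frac{z_j+Q(\lambda_j)z_j^{-1}-2\lambda_j^{g+1}-I_0\lambda_j^g}{B'(\lambda_j)}\quad (N=2g+2),$$ where $B'(\lambda_j)=b_0\prod_{k\ne j}(\lambda_j-\lambda_k)$ and $b_0,I_0$ are the given functions of $v$ (hence of $x$). Then $H=I_1/b_0$ when evaluated at the spectral Darboux coordinates, and the functions $\lambda_j(x),z_j(x)$ satisfy the (non-autonomous) Hamiltonian system $$\dot\lambda_j=z_j\frac{\partial H}{\partial z_j},\qquad \dot z_j=-z_j\frac{\partial H}{\partial\lambda_j}\qquad(j=1,\dots,g).$$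
   Context: Fix constants $\alpha_1,\dots,\alpha_N$, extended $N$-periodically; $\alpha=\sum_{n=1}^N\alpha_n$, $\beta_n=\alpha_1+\cdots+\alpha_n$, $\beta_0=0$. A solution of the $N$-periodic dressing chain is a family of functions $v_n(x)$, $v_{n+N}=v_n$, with $\dot v_n+\dot v_{n+1}=v_{n+1}^2-v_n^2+\alpha_n$ (dot $=d/dx$). Put $v=v_1+\cdots+v_N$ (so $\dot v=\alpha/2$). With $V_n(\lambda)=\begin{pmatrix}v_n&1\\ \lambda+v_n^2&v_n\end{pmatrix}$, the transition matrix is $T(\lambda)=V_N(\lambda+\beta_{N-1})\cdots V_2(\lambda+\beta_1)V_1(\lambda)$; $Q(\lambda)=(-1)^N\lambda\prod_{n=1}^{N-1}(\lambda+\beta_n)$. The polynomial $B$ has degree $g$ with leading coefficient $b_0=1$ if $N=2g+1$ and $b_0=v$ if $N=2g+2$; moreover $I_0=2v$ if $N=2g+1$ and $I_0=v^2+\sum_{n=1}^{2g+1}\beta_n$ if $N=2g+2$. The spectral Darboux coordinates are the zeros $\lambda_j$ of $B$ and $z_j=A(\lambda_j)$. *)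

theory Defs
  imports "HOL-Analysis.Analysis" "HOL-Computational_Algebra.Polynomial"
begin

text \<open>2x2 matrices of polynomials in lambda, as tuples (A, B, C, D)
  representing the matrix with rows (A B) and (C D).\<close>
type_synonym pmat2 = "complex poly \<times> complex poly \<times> complex poly \<times> complex poly"

fun pm_mult :: "pmat2 \<Rightarrow> pmat2 \<Rightarrow> pmat2" where
  "pm_mult (a, b, c, d) (a', b', c', d') =
     (a * a' + b * c', a * b' + b * d', c * a' + d * c', c * b' + d * d')"

definition pm_id :: pmat2 where "pm_id = (1, 0, 0, 1)"

definition beta :: "(nat \<Rightarrow> complex) \<Rightarrow> nat \<Rightarrow> complex" where
  "beta \<alpha> n = (\<Sum>k=1..n. \<alpha> k)"

text \<open>V_n(lambda + c) as a polynomial matrix in lambda, with v_n = w.\<close>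
definition Vmat :: "complex \<Rightarrow> complex \<Rightarrow> pmat2" where
  "Vmat w c = ([:w:], 1, [:c + w^2, 1:], [:w:])"

fun Tprod :: "(nat \<Rightarrow> complex) \<Rightarrow> (nat \<Rightarrow> real \<Rightarrow> complex) \<Rightarrow> real \<Rightarrow> nat \<Rightarrow> pmat2" where
  "Tprod \<alpha> v x 0 = pm_id"
| "Tprod \<alpha> v x (Suc n) = pm_mult (Vmat (v (Suc n) x) (beta \<alpha> n)) (Tprod \<alpha> v x n)"

definition Tmat :: "nat \<Rightarrow> (nat \<Rightarrow> complex) \<Rightarrow> (nat \<Rightarrow> real \<Rightarrow> complex) \<Rightarrow> real \<Rightarrow> pmat2" where
  "Tmat N \<alpha> v x = Tprod \<alpha> v x N"

definition Apol :: "nat \<Rightarrow> (nat \<Rightarrow> complex) \<Rightarrow> (nat \<Rightarrow> real \<Rightarrow> complex) \<Rightarrow> real \<Rightarrow> complex poly" where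
  "Apol N \<alpha> v x = (case Tmat N \<alpha> v x of (a, b, c, d) \<Rightarrow> a)"
definition Bpol :: "nat \<Rightarrow> (nat \<Rightarrow> complex) \<Rightarrow> (nat \<Rightarrow> real \<Rightarrow> complex) \<Rightarrow> real \<Rightarrow> complex poly" where
  "Bpol N \<alpha> v x = (case Tmat N \<alpha> v x of (a, b, c, d) \<Rightarrow> b)"
definition Ppol :: "nat \<Rightarrow> (nat \<Rightarrow> complex) \<Rightarrow> (nat \<Rightarrow> real \<Rightarrow> complex) \<Rightarrow> real \<Rightarrow> complex poly" where
  "Ppol N \<alpha> v x = (case Tmat N \<alpha> v x of (a, b, c, d) \<Rightarrow> a + d)"

definition Qfun :: "nat \<Rightarrow> (nat \<Rightarrow> complex) \<Rightarrow> complex \<Rightarrow> complex" where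
  "Qfun N \<alpha> l = (-1)^N * l * (\<Prod>n=1..N-1. (l + beta \<alpha> n))"

definition vsum :: "nat \<Rightarrow> (nat \<Rightarrow> real \<Rightarrow> complex) \<Rightarrow> real \<Rightarrow> complex" where
  "vsum N v x = (\<Sum>n=1..N. v n x)"

definition b0 :: "nat \<Rightarrow> (nat \<Rightarrow> real \<Rightarrow> complex) \<Rightarrow> real \<Rightarrow> complex" where
  "b0 N v x = (if odd N then 1 else vsum N v x)"

definition I0 :: "nat \<Rightarrow> nat \<Rightarrow> (nat \<Rightarrow> complex) \<Rightarrow> (nat \<Rightarrow> real \<Rightarrow> complex) \<Rightarrow> real \<Rightarrow> complex" where
  "I0 N g \<alpha> v x = (if odd N then 2 * vsum N v x
                    else (vsum N v x)^2 + (\<Sum>n=1..2*g+1. beta \<alpha> n))"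

definition I1 :: "nat \<Rightarrow> nat \<Rightarrow> (nat \<Rightarrow> complex) \<Rightarrow> (nat \<Rightarrow> real \<Rightarrow> complex) \<Rightarrow> real \<Rightarrow> complex" where
  "I1 N g \<alpha> v x = coeff (Ppol N \<alpha> v x) (g - 1)"

definition Ham :: "nat \<Rightarrow> nat \<Rightarrow> (nat \<Rightarrow> complex) \<Rightarrow> (nat \<Rightarrow> real \<Rightarrow> complex) \<Rightarrow> real
                   \<Rightarrow> (nat \<Rightarrow> complex) \<Rightarrow> (nat \<Rightarrow> complex) \<Rightarrow> complex" where
  "Ham N g \<alpha> v x L Z =
     (\<Sum>j=1..g. (Z j + Qfun N \<alpha> (L j) / Z j
                  - (if odd N then 0 else 2 * L j ^ (g + 1))
                  - I0 N g \<alpha> v x * L j ^ g)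
               / (b0 N v x * (\<Prod>k\<in>{1..g} - {j}. (L j - L k))))"

definition dHdz :: "nat \<Rightarrow> nat \<Rightarrow> (nat \<Rightarrow> complex) \<Rightarrow> (nat \<Rightarrow> real \<Rightarrow> complex) \<Rightarrow> real
                   \<Rightarrow> (nat \<Rightarrow> complex) \<Rightarrow> (nat \<Rightarrow> complex) \<Rightarrow> nat \<Rightarrow> complex" where
  "dHdz N g \<alpha> v x L Z j = deriv (\<lambda>w. Ham N g \<alpha> v x L (Z(j := w))) (Z j)"

definition dHdl :: "nat \<Rightarrow> nat \<Rightarrow> (nat \<Rightarrow> complex) \<Rightarrow> (nat \<Rightarrow> real \<Rightarrow> complex) \<Rightarrow> real
                   \<Rightarrow> (nat \<Rightarrow> complex) \<Rightarrow> (nat \<Rightarrow> complex) \<Rightarrow> nat \<Rightarrow> complex" where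
  "dHdl N g \<alpha> v x L Z j = deriv (\<lambda>w. Ham N g \<alpha> v x (L(j := w)) Z) (L j)"

end

theory Submission
  imports Defs
begin


definition eA :: "pmat2 \<Rightarrow> complex poly" where "eA T = fst T"
definition eB :: "pmat2 \<Rightarrow> complex poly" where "eB T = fst (snd T)"
definition eC :: "pmat2 \<Rightarrow> complex poly" where "eC T = fst (snd (snd T))"
definition eD :: "pmat2 \<Rightarrow> complex poly" where "eD T = snd (snd (snd T))"

lemma Tprod_Suc_entries:
  fixes \<alpha> v t n
  defines "T \<equiv> Tprod \<alpha> v t n" and "w \<equiv> v (Suc n) t" and "c \<equiv> beta \<alpha> n"
  shows "eA (Tprod \<alpha> v t (Suc n)) = [:w:] * eA T + eC T"
    and "eB (Tprod \<alpha> v t (Suc n)) = [:w:] * eB T + eD T"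
    and "eC (Tprod \<alpha> v t (Suc n)) = [:c + w^2, 1:] * eA T + [:w:] * eC T"
    and "eD (Tprod \<alpha> v t (Suc n)) = [:c + w^2, 1:] * eB T + [:w:] * eD T"
  by (cases T, simp add: T_def w_def c_def Vmat_def eA_def eB_def eC_def eD_def)+

lemma Tprod_0_entries:
  "eA (Tprod \<alpha> v t 0) = 1" "eB (Tprod \<alpha> v t 0) = 0" "eC (Tprod \<alpha> v t 0) = 0" "eD (Tprod \<alpha> v t 0) = 1"
  by (simp_all add: pm_id_def eA_def eB_def eC_def eD_def)

lemma coeff_const_mult [simp]: "coeff ([:a:] * p) k = a * coeff p k"
  by simp

lemma lin_mult_eq: "[:a, 1:] * (p :: complex poly) = smult a p + pCons 0 p"
  by (simp add: mult_pCons_left)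

lemma coeff_lin_mult [simp]: "coeff ([:a, 1:] * (p :: complex poly)) k = a * coeff p k + (if k = 0 then 0 else coeff p (k - 1))"
  unfolding lin_mult_eq by (cases k) simp_all

lemma coeff_pCons0: "coeff (pCons 0 p) k = (if k = 0 then 0 else coeff p (k - 1))"
  by (cases k) simp_all

definition sv :: "(nat \<Rightarrow> real \<Rightarrow> complex) \<Rightarrow> real \<Rightarrow> nat \<Rightarrow> complex" where
  "sv v t n = (\<Sum>k=1..n. v k t)"
definition sb :: "(nat \<Rightarrow> complex) \<Rightarrow> nat \<Rightarrow> complex" where
  "sb \<alpha> n = (\<Sum>k=1..n-1. beta \<alpha> k)"

lemma sv_Suc: "sv v t (Suc n) = sv v t n + v (Suc n) t"
  by (simp add: sv_def)

lemma beta_0: "beta \<alpha> 0 = 0" by (simp add: beta_def)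
lemma beta_Suc: "beta \<alpha> (Suc n) = beta \<alpha> n + \<alpha> (Suc n)" by (simp add: beta_def)

lemma sb_Suc: "sb \<alpha> (Suc n) = sb \<alpha> n + beta \<alpha> n"
proof (cases n)
  case 0 then show ?thesis by (simp add: sb_def beta_0)
next
  case (Suc m) then show ?thesis by (simp add: sb_def)
qed

definition InvE :: "pmat2 \<Rightarrow> nat \<Rightarrow> complex \<Rightarrow> complex \<Rightarrow> bool" where
  "InvE T m s b \<longleftrightarrow>
     (\<forall>k>m. coeff (eA T) k = 0) \<and> coeff (eA T) m = 1 \<and>
     (\<forall>k\<ge>m. coeff (eB T) k = 0) \<and> coeff (pCons 0 (eB T)) m = s \<and>
     (\<forall>k>m. coeff (eC T) k = 0) \<and> coeff (eC T) m = s \<and>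
     (\<forall>k>m. coeff (eD T) k = 0) \<and> coeff (eD T) m = 1 \<and>
     coeff (pCons 0 (eA T)) m + coeff (pCons 0 (eD T)) m = s^2 + b"

definition InvO :: "pmat2 \<Rightarrow> nat \<Rightarrow> complex \<Rightarrow> complex \<Rightarrow> bool" where
  "InvO T m s b \<longleftrightarrow>
     (\<forall>k>m. coeff (eA T) k = 0) \<and> coeff (eA T) m = s \<and>
     (\<forall>k>m. coeff (eB T) k = 0) \<and> coeff (eB T) m = 1 \<and>
     (\<forall>k>Suc m. coeff (eC T) k = 0) \<and> coeff (eC T) (Suc m) = 1 \<and>
     (\<forall>k>m. coeff (eD T) k = 0) \<and> coeff (eD T) m = s \<and>
     coeff (eC T) m + coeff (pCons 0 (eB T)) m = s^2 + b"

lemma InvE_step: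
  assumes "InvE (Tprod \<alpha> v t n) m (sv v t n) (sb \<alpha> n)"
  shows "InvO (Tprod \<alpha> v t (Suc n)) m (sv v t (Suc n)) (sb \<alpha> (Suc n))"
  using assms unfolding InvE_def InvO_def Tprod_Suc_entries sv_Suc sb_Suc
  by (auto simp: coeff_pCons0 algebra_simps power2_eq_square)

lemma InvO_step:
  assumes "InvO (Tprod \<alpha> v t n) m (sv v t n) (sb \<alpha> n)"
  shows "InvE (Tprod \<alpha> v t (Suc n)) (Suc m) (sv v t (Suc n)) (sb \<alpha> (Suc n))"
  using assms unfolding InvE_def InvO_def Tprod_Suc_entries sv_Suc sb_Suc
  by (auto simp: coeff_pCons0 algebra_simps power2_eq_square)

lemma Inv_all:
  "InvE (Tprod \<alpha> v t (2*m)) m (sv v t (2*m)) (sb \<alpha> (2*m)) \<and>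
   InvO (Tprod \<alpha> v t (Suc (2*m))) m (sv v t (Suc (2*m))) (sb \<alpha> (Suc (2*m)))"
proof (induction m)
  case 0
  have "InvE (Tprod \<alpha> v t 0) 0 (sv v t 0) (sb \<alpha> 0)"
    unfolding InvE_def Tprod_0_entries by (simp add: sv_def sb_def coeff_pCons0)
  then show ?case using InvE_step by fastforce
next
  case (Suc m)
  then have "InvE (Tprod \<alpha> v t (2 * Suc m)) (Suc m) (sv v t (2 * Suc m)) (sb \<alpha> (2 * Suc m))"
    using InvO_step by fastforce
  then show ?case using InvE_step by fastforce
qed

lemma struct_odd:
  fixes \<alpha> v t
  assumes "N = 2*g+1"
  defines "T \<equiv> Tprod \<alpha> v t N"
  shows "(\<forall>k>g. coeff (eA T + eD T) k = 0) \<and> coeff (eA T + eD T) g = 2 * sv v t N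
       \<and> (\<forall>k>g. coeff (eB T) k = 0) \<and> coeff (eB T) g = 1"
  using Inv_all[of \<alpha> v t g] unfolding T_def assms(1) InvO_def by auto

lemma struct_even:
  fixes \<alpha> v t
  assumes "N = 2*g+2"
  defines "T \<equiv> Tprod \<alpha> v t N"
  shows "(\<forall>k>Suc g. coeff (eA T + eD T) k = 0) \<and> coeff (eA T + eD T) (Suc g) = 2
       \<and> coeff (eA T + eD T) g = (sv v t N)^2 + sb \<alpha> N
       \<and> (\<forall>k>g. coeff (eB T) k = 0) \<and> coeff (eB T) g = sv v t N"
proof -
  have "2*g+2 = 2 * Suc g" by simp
  then show ?thesis
    using Inv_all[of \<alpha> v t "Suc g"] unfolding T_def assms(1) InvE_def
    by (auto simp del: mult_Suc_right)
qed

lemma det_Tprod: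
  fixes \<alpha> v t n
  defines "T \<equiv> Tprod \<alpha> v t n"
  shows "eA T * eD T - eB T * eC T = (\<Prod>k<n. - [:beta \<alpha> k, 1:])"
  unfolding T_def
proof (induction n)
  case 0 then show ?case by (simp add: pm_id_def eA_def eB_def eC_def eD_def)
next
  case (Suc n)
  define A where "A = eA (Tprod \<alpha> v t n)"
  define B where "B = eB (Tprod \<alpha> v t n)"
  define C where "C = eC (Tprod \<alpha> v t n)"
  define D where "D = eD (Tprod \<alpha> v t n)"
  have IH: "A * D - B * C = (\<Prod>k<n. - [:beta \<alpha> k, 1:])" using Suc A_def B_def C_def D_def by simp
  have "eA (Tprod \<alpha> v t (Suc n)) * eD (Tprod \<alpha> v t (Suc n)) - eB (Tprod \<alpha> v t (Suc n)) * eC (Tprod \<alpha> v t (Suc n))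
      = - [:beta \<alpha> n, 1:] * (A * D - B * C)"
    unfolding Tprod_Suc_entries A_def[symmetric] B_def[symmetric] C_def[symmetric] D_def[symmetric]
    apply (subst poly_eq_poly_eq_iff[symmetric])
    apply (rule ext)
    apply (simp add: algebra_simps power2_eq_square)
    done
  then show ?case using IH by (simp add: mult.commute)
qed

lemma poly_Qprod:
  assumes "N \<ge> 1"
  shows "poly (\<Prod>k<N. - [:beta \<alpha> k, 1:]) l = Qfun N \<alpha> l"
proof -
  obtain M where N: "N = Suc M" using assms by (cases N) auto
  have "poly (\<Prod>k<N. - [:beta \<alpha> k, 1:]) l = (\<Prod>k<N. - (beta \<alpha> k + l))"
    by (simp add: poly_prod)
  also have "\<dots> = (\<Prod>k<N. (-1) * (l + beta \<alpha> k))" by (simp add: algebra_simps)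
  also have "\<dots> = (\<Prod>k<N. (-1::complex)) * (\<Prod>k<N. (l + beta \<alpha> k))" by (rule prod.distrib)
  also have "\<dots> = (-1)^N * (\<Prod>k<N. (l + beta \<alpha> k))" by simp
  also have "(\<Prod>k<N. (l + beta \<alpha> k)) = l * (\<Prod>k<M. (l + beta \<alpha> (Suc k)))"
    unfolding N prod.lessThan_Suc_shift by (simp add: beta_0)
  also have "(\<Prod>k<M. (l + beta \<alpha> (Suc k))) = (\<Prod>n=1..N-1. (l + beta \<alpha> n))"
    unfolding N by (simp add: prod.atLeast1_atMost_eq)
  finally show ?thesis by (simp add: Qfun_def)
qed



lemma prod_lin:
  fixes L :: "nat \<Rightarrow> complex"
  assumes "finite S"
  shows "degree (\<Prod>k\<in>S. [:-L k, 1:]) = card S" "coeff (\<Prod>k\<in>S. [:-L k, 1:]) (card S) = 1"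
proof -
  have d: "degree (\<Prod>k\<in>S. [:-L k, 1:]) = card S"
    by (subst degree_prod_eq_sum_degree) auto
  show "degree (\<Prod>k\<in>S. [:-L k, 1:]) = card S" by (fact d)
  have "lead_coeff (\<Prod>k\<in>S. [:-L k, 1:]) = 1" by (simp add: lead_coeff_prod)
  then show "coeff (\<Prod>k\<in>S. [:-L k, 1:]) (card S) = 1" using d by simp
qed

lemma zero_poly:
  fixes p :: "complex poly" and L :: "nat \<Rightarrow> complex"
  assumes "\<forall>k\<ge>g. coeff p k = 0" "inj_on L {1..g}" "\<forall>j\<in>{1..g}. poly p (L j) = 0"
  shows "p = 0"
proof (cases "g = 0")
  case True then show ?thesis using assms(1) by (simp add: poly_eq_iff)
next
  case False
  have dp: "degree p < g"
    using degree_le[of "g - 1" p] assms(1) False by fastforce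
  have card: "card (L ` {1..g}) = g" using assms(2) by (simp add: card_image)
  show ?thesis
    by (rule poly_eqI_degree[where A = "L ` {1..g}"]) (use assms dp card False in auto)
qed

lemma lagrange:
  fixes R :: "complex poly" and L :: "nat \<Rightarrow> complex"
  assumes R: "\<forall>k\<ge>g. coeff R k = 0" and inj: "inj_on L {1..g}" and g: "g \<ge> 1"
  shows "(\<Sum>j\<in>{1..g}. poly R (L j) / (\<Prod>k\<in>{1..g}-{j}. (L j - L k))) = coeff R (g - 1)"
proof -
  define pj where "pj j = (\<Prod>k\<in>{1..g}-{j}. [:-L k, 1:])" for j
  define dj where "dj j = (\<Prod>k\<in>{1..g}-{j}. (L j - L k))" for j
  define S where "S = (\<Sum>j\<in>{1..g}. smult (poly R (L j) / dj j) (pj j))"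
  have cardj: "card ({1..g}-{j}) = g - 1" if "j \<in> {1..g}" for j using that by simp
  have pjdeg: "degree (pj j) = g - 1" and pjlc: "coeff (pj j) (g - 1) = 1" if "j \<in> {1..g}" for j
    using prod_lin[of "{1..g}-{j}" L] cardj[OF that] unfolding pj_def by auto
  have pjc: "coeff (pj j) k = 0" if "j \<in> {1..g}" "k \<ge> g" for j k
    using pjdeg[OF that(1)] that(2) g by (intro coeff_eq_0) linarith
  have djnz: "dj j \<noteq> 0" if "j \<in> {1..g}" for j
  proof -
    have "L j - L k \<noteq> 0" if "k \<in> {1..g}-{j}" for k
      using that \<open>j \<in> {1..g}\<close> inj inj_on_contraD[of L "{1..g}" j k] by auto
    then show ?thesis unfolding dj_def by (simp add: prod_zero_iff)
  qed
  have poly_pj: "poly (pj j) (L i) = (if i = j then dj j else 0)" if "i \<in> {1..g}" "j \<in> {1..g}" for i j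
  proof (cases "i = j")
    case True then show ?thesis by (simp add: pj_def dj_def poly_prod)
  next
    case False
    then have "i \<in> {1..g}-{j}" using that by auto
    then have "(\<Prod>k\<in>{1..g}-{j}. (L i - L k)) = 0"
      by (intro prod_zero) auto
    then show ?thesis using False by (simp add: pj_def poly_prod)
  qed
  have polyS: "poly S (L i) = poly R (L i)" if "i \<in> {1..g}" for i
  proof -
    have "poly S (L i) = (\<Sum>j\<in>{1..g}. poly R (L j) / dj j * poly (pj j) (L i))"
      by (simp add: S_def poly_sum)
    also have "\<dots> = (\<Sum>j\<in>{1..g}. if j = i then poly R (L i) else 0)"
    proof (rule sum.cong)
      fix j assume j: "j \<in> {1..g}"
      show "poly R (L j) / dj j * poly (pj j) (L i) = (if j = i then poly R (L i) else 0)"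
        using poly_pj[OF that j] djnz[OF j] by (cases "j = i") simp_all
    qed simp
    also have "\<dots> = poly R (L i)" using that by simp
    finally show ?thesis .
  qed
  have coeffS: "coeff S k = (\<Sum>j\<in>{1..g}. poly R (L j) / dj j * coeff (pj j) k)" for k
    by (simp add: S_def coeff_sum)
  have "R - S = 0"
  proof (rule zero_poly[OF _ inj])
    show "\<forall>k\<ge>g. coeff (R - S) k = 0"
    proof (intro allI impI)
      fix k assume k: "g \<le> k"
      have "coeff S k = 0" unfolding coeffS by (rule sum.neutral) (use pjc k in simp)
      then show "coeff (R - S) k = 0" using R k by simp
    qed
    show "\<forall>j\<in>{1..g}. poly (R - S) (L j) = 0" using polyS by simp
  qed
  then have "coeff R (g - 1) = coeff S (g - 1)" by simp
  also have "\<dots> = (\<Sum>j\<in>{1..g}. poly R (L j) / dj j)"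
    unfolding coeffS
  proof (rule sum.cong)
    fix j assume j: "j \<in> {1..g}"
    show "poly R (L j) / dj j * coeff (pj j) (g - 1) = poly R (L j) / dj j" using pjlc[OF j] by simp
  qed simp
  finally show ?thesis by (simp add: dj_def)
qed

lemma factor:
  fixes B :: "complex poly" and L :: "nat \<Rightarrow> complex"
  assumes "\<forall>k>g. coeff B k = 0" "coeff B g = b" "inj_on L {1..g}" "\<forall>j\<in>{1..g}. poly B (L j) = 0"
  shows "B = smult b (\<Prod>k\<in>{1..g}. [:-L k, 1:])"
proof -
  have d: "degree (\<Prod>k\<in>{1..g}. [:-L k, 1:]) = g" "coeff (\<Prod>k\<in>{1..g}. [:-L k, 1:]) g = 1"
    using prod_lin[of "{1..g}" L] by auto
  have "B - smult b (\<Prod>k\<in>{1..g}. [:-L k, 1:]) = 0"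
  proof (rule zero_poly[OF _ assms(3)])
    show "\<forall>k\<ge>g. coeff (B - smult b (\<Prod>k\<in>{1..g}. [:- L k, 1:])) k = 0"
    proof (intro allI impI)
      fix k assume "g \<le> k"
      then consider "k = g" | "k > g" by linarith
      then show "coeff (B - smult b (\<Prod>k\<in>{1..g}. [:- L k, 1:])) k = 0"
      proof cases
        case 1 then show ?thesis using assms(2) d by simp
      next
        case 2 then show ?thesis using assms(1) d(1) by (simp add: coeff_eq_0)
      qed
    qed
    show "\<forall>j\<in>{1..g}. poly (B - smult b (\<Prod>k\<in>{1..g}. [:- L k, 1:])) (L j) = 0"
      using assms(4) by (auto simp: poly_prod intro!: prod_zero)
  qed
  then show ?thesis by simp
qed



lemma hvd_iff:
  fixes f :: "real \<Rightarrow> complex"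
  shows "(f has_vector_derivative D) (at x) \<longleftrightarrow> ((\<lambda>y. (f y - f x) / of_real (y - x)) \<longlongrightarrow> D) (at x)"
proof -
  have bl: "bounded_linear (\<lambda>h. h *\<^sub>R D)" by (rule bounded_linear_scaleR_left)
  have e: "\<forall>\<^sub>F y in at x. norm ((f y - f x) - (y - x) *\<^sub>R D) / norm (y - x) = norm ((f y - f x) / of_real (y - x) - D)"
  proof -
    have "norm ((f y - f x) - (y - x) *\<^sub>R D) / norm (y - x) = norm ((f y - f x) / of_real (y - x) - D)"
      if "y \<noteq> x" for y
    proof -
      have nz: "(of_real (y - x) :: complex) \<noteq> 0" using that by simp
      have eq: "(f y - f x) - (y - x) *\<^sub>R D = of_real (y - x) * ((f y - f x) / of_real (y - x) - D)"
        using nz by (simp add: scaleR_conv_of_real field_simps)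
      have "norm ((f y - f x) - (y - x) *\<^sub>R D) = norm ((of_real (y - x) :: complex) * ((f y - f x) / of_real (y - x) - D))"
        by (simp only: eq)
      also have "\<dots> = norm (y - x) * norm ((f y - f x) / of_real (y - x) - D)"
        by (simp only: norm_mult norm_of_real real_norm_def)
      finally have "norm ((f y - f x) - (y - x) *\<^sub>R D) = norm (y - x) * norm ((f y - f x) / of_real (y - x) - D)" .
      then show ?thesis using that by simp
    qed
    then show ?thesis by (simp add: eventually_at_filter)
  qed
  have "(f has_vector_derivative D) (at x) \<longleftrightarrow>
      ((\<lambda>y. norm ((f y - f x) - (y - x) *\<^sub>R D) / norm (y - x)) \<longlongrightarrow> 0) (at x)"
    unfolding has_vector_derivative_def has_derivative_iff_norm using bl by simp
  also have "\<dots> \<longleftrightarrow> ((\<lambda>y. norm ((f y - f x) / of_real (y - x) - D)) \<longlongrightarrow> 0) (at x)"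
    by (rule tendsto_cong[OF e])
  also have "\<dots> \<longleftrightarrow> ((\<lambda>y. (f y - f x) / of_real (y - x)) \<longlongrightarrow> D) (at x)"
    by (simp add: tendsto_norm_zero_iff LIM_zero_iff)
  finally show ?thesis .
qed

lemma vanish_mult:
  fixes h m :: "real \<Rightarrow> complex"
  assumes "h x = 0" "(h has_vector_derivative h') (at x)" "(m \<longlongrightarrow> m x) (at x)"
  shows "((\<lambda>t. h t * m t) has_vector_derivative h' * m x) (at x)"
proof -
  have "((\<lambda>y. (h y - h x) / of_real (y - x) * m y) \<longlongrightarrow> h' * m x) (at x)"
    using assms(2,3) unfolding hvd_iff by (intro tendsto_mult)
  then show ?thesis unfolding hvd_iff using assms(1) by (simp add: algebra_simps)
qed

definition cder :: "real \<Rightarrow> (real \<Rightarrow> complex poly) \<Rightarrow> complex poly \<Rightarrow> bool" where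
  "cder x F G \<longleftrightarrow> (\<forall>k. ((\<lambda>t. coeff (F t) k) has_vector_derivative coeff G k) (at x))"

lemma cder_add: "cder x F G \<Longrightarrow> cder x F' G' \<Longrightarrow> cder x (\<lambda>t. F t + F' t) (G + G')"
  unfolding cder_def by (auto intro!: derivative_eq_intros)

lemma cder_const: "cder x (\<lambda>t. p) 0"
  unfolding cder_def by (auto intro!: derivative_eq_intros)

lemma cder_cmult:
  assumes "(f has_vector_derivative f') (at x)" "cder x F G"
  shows "cder x (\<lambda>t. [:f t:] * F t) ([:f':] * F x + [:f x:] * G)"
  using assms unfolding cder_def
  by (auto intro!: derivative_eq_intros simp: algebra_simps)

lemma cder_X:
  assumes "cder x F G"
  shows "cder x (\<lambda>t. [:0, 1:] * F t) ([:0, 1:] * G)"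
  unfolding cder_def
proof
  fix k
  show "((\<lambda>t. coeff ([:0, 1:] * F t) k) has_vector_derivative coeff ([:0, 1:] * G) k) (at x)"
  proof (cases k)
    case 0 then show ?thesis by (simp add: mult_pCons_left)
  next
    case (Suc j) then show ?thesis using assms unfolding cder_def by (simp add: mult_pCons_left)
  qed
qed

lemma cder_cong: "cder x F G \<Longrightarrow> G = G' \<Longrightarrow> cder x F G'" by simp

lemma poly_bound:
  fixes p :: "complex poly"
  assumes "\<forall>k>K. coeff p k = 0"
  shows "poly p y = (\<Sum>i\<le>K. coeff p i * y ^ i)"
proof -
  have "degree p \<le> K" using assms by (intro degree_le) auto
  then have "(\<Sum>i\<le>K. coeff p i * y ^ i) = (\<Sum>i\<le>degree p. coeff p i * y ^ i)"
    by (intro sum.mono_neutral_right) (auto simp: coeff_eq_0)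
  then show ?thesis by (simp add: poly_altdef)
qed

lemma cder_bound:
  assumes "cder x F G" "\<forall>t. \<forall>k>K. coeff (F t) k = 0"
  shows "\<forall>k>K. coeff G k = 0"
proof (intro allI impI)
  fix k assume "k > K"
  then have "(\<lambda>t. coeff (F t) k) = (\<lambda>t. 0)" using assms(2) by auto
  then have "((\<lambda>t. 0::complex) has_vector_derivative coeff G k) (at x)"
    using assms(1) unfolding cder_def by metis
  moreover have "((\<lambda>t. 0::complex) has_vector_derivative 0) (at x)" by (rule derivative_intros)
  ultimately show "coeff G k = 0" using vector_derivative_unique_at by metis
qed

lemma cder_poly:
  assumes "cder x F G" "\<forall>t. \<forall>k>K. coeff (F t) k = 0" "(\<mu> \<longlongrightarrow> \<mu> x) (at x)"
  shows "((\<lambda>t. poly (F t) (\<mu> t) - poly (F x) (\<mu> t)) has_vector_derivative poly G (\<mu> x)) (at x)"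
proof -
  have GK: "\<forall>k>K. coeff G k = 0" by (rule cder_bound[OF assms(1,2)])
  have eq: "(\<lambda>t. poly (F t) (\<mu> t) - poly (F x) (\<mu> t)) = (\<lambda>t. \<Sum>i\<le>K. (coeff (F t) i - coeff (F x) i) * \<mu> t ^ i)"
    using assms(2) by (simp add: poly_bound[of K] sum_subtractf[symmetric] algebra_simps)
  have "((\<lambda>t. \<Sum>i\<le>K. (coeff (F t) i - coeff (F x) i) * \<mu> t ^ i) has_vector_derivative
          (\<Sum>i\<le>K. coeff G i * \<mu> x ^ i)) (at x)"
  proof (rule has_vector_derivative_sum)
    fix i
    have c: "((\<lambda>t. \<mu> t ^ i) \<longlongrightarrow> \<mu> x ^ i) (at x)" using assms(3) by (intro tendsto_intros)
    have d: "((\<lambda>t. coeff (F t) i - coeff (F x) i) has_vector_derivative coeff G i) (at x)"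
      using assms(1) unfolding cder_def by (auto intro!: derivative_eq_intros)
    show "((\<lambda>t. (coeff (F t) i - coeff (F x) i) * \<mu> t ^ i) has_vector_derivative coeff G i * \<mu> x ^ i) (at x)"
      using vanish_mult[of "\<lambda>t. coeff (F t) i - coeff (F x) i" x "coeff G i" "\<lambda>t. \<mu> t ^ i", OF _ d c] by simp
  qed
  then show ?thesis unfolding eq using GK by (simp add: poly_bound[of K])
qed



definition rS :: "(nat \<Rightarrow> complex) \<Rightarrow> (nat \<Rightarrow> real \<Rightarrow> complex) \<Rightarrow> (nat \<Rightarrow> real \<Rightarrow> complex) \<Rightarrow> real \<Rightarrow> nat \<Rightarrow> complex" where
  "rS \<alpha> v v' x n = beta \<alpha> n + (v (Suc n) x)^2 - v' (Suc n) x"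

definition MA where "MA \<alpha> v v' x n = eC (Tprod \<alpha> v x n) - [:rS \<alpha> v v' x 0, 1:] * eB (Tprod \<alpha> v x n)"
definition MB where "MB \<alpha> v (v' :: nat \<Rightarrow> real \<Rightarrow> complex) x n = eD (Tprod \<alpha> v x n) - eA (Tprod \<alpha> v x n)"
definition MC where "MC \<alpha> v v' x n = [:rS \<alpha> v v' x n, 1:] * eA (Tprod \<alpha> v x n) - [:rS \<alpha> v v' x 0, 1:] * eD (Tprod \<alpha> v x n)"
definition MD where "MD \<alpha> v v' x n = [:rS \<alpha> v v' x n, 1:] * eB (Tprod \<alpha> v x n) - eC (Tprod \<alpha> v x n)"

lemma lin_split: "[:a, 1:] * (p :: complex poly) = [:a:] * p + [:0, 1:] * p"
  by (simp add: mult_pCons_left)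

lemma Tder:
  fixes \<alpha> :: "nat \<Rightarrow> complex" and v v' :: "nat \<Rightarrow> real \<Rightarrow> complex" and x :: real
  assumes vd: "\<And>n. (v n has_vector_derivative v' n x) (at x)"
    and ch: "\<And>n. v' n x + v' (Suc n) x = (v (Suc n) x)^2 - (v n x)^2 + \<alpha> n"
  shows "cder x (\<lambda>t. eA (Tprod \<alpha> v t n)) (MA \<alpha> v v' x n) \<and>
         cder x (\<lambda>t. eB (Tprod \<alpha> v t n)) (MB \<alpha> v v' x n) \<and>
         cder x (\<lambda>t. eC (Tprod \<alpha> v t n)) (MC \<alpha> v v' x n) \<and>
         cder x (\<lambda>t. eD (Tprod \<alpha> v t n)) (MD \<alpha> v v' x n)"
proof (induction n)
  case 0
  show ?case
    unfolding MA_def MB_def MC_def MD_def Tprod_0_entries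
    using cder_const[of x 1] cder_const[of x 0] by simp
next
  case (Suc n)
  define A where "A t = eA (Tprod \<alpha> v t n)" for t
  define B where "B t = eB (Tprod \<alpha> v t n)" for t
  define C where "C t = eC (Tprod \<alpha> v t n)" for t
  define D where "D t = eD (Tprod \<alpha> v t n)" for t
  define w where "w t = v (Suc n) t" for t
  define c where "c = beta \<alpha> n"
  have wd: "(w has_vector_derivative v' (Suc n) x) (at x)" unfolding w_def by (rule vd)
  have w2d: "((\<lambda>t. c + (w t)^2) has_vector_derivative 2 * w x * v' (Suc n) x) (at x)"
  proof -
    have m: "((\<lambda>t. w t * w t) has_vector_derivative w x * v' (Suc n) x + v' (Suc n) x * w x) (at x)"
      using has_vector_derivative_mult[OF wd wd] .
    have "((\<lambda>t. c + w t * w t) has_vector_derivative 0 + (w x * v' (Suc n) x + v' (Suc n) x * w x)) (at x)"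
      by (intro has_vector_derivative_add has_vector_derivative_const m)
    then show ?thesis by (simp add: power2_eq_square algebra_simps)
  qed
  have IH: "cder x A (MA \<alpha> v v' x n) \<and> cder x B (MB \<alpha> v v' x n) \<and>
    cder x C (MC \<alpha> v v' x n) \<and> cder x D (MD \<alpha> v v' x n)"
    unfolding A_def[abs_def] B_def[abs_def] C_def[abs_def] D_def[abs_def] by (rule Suc)
  then have IA: "cder x A (MA \<alpha> v v' x n)" and IB: "cder x B (MB \<alpha> v v' x n)"
    and IC: "cder x C (MC \<alpha> v v' x n)" and ID: "cder x D (MD \<alpha> v v' x n)" by auto
  have rS0: "rS \<alpha> v v' x 0 = (v 1 x)^2 - v' 1 x" by (simp add: rS_def beta_0)
  have rSn: "rS \<alpha> v v' x n = c + (w x)^2 - v' (Suc n) x" by (simp add: rS_def c_def w_def)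
  have rSSn: "rS \<alpha> v v' x (Suc n) = c + (w x)^2 + v' (Suc n) x"
    using ch[of "Suc n"] by (simp add: rS_def c_def w_def beta_Suc algebra_simps)
  have EA: "(\<lambda>t. eA (Tprod \<alpha> v t (Suc n))) = (\<lambda>t. [:w t:] * A t + C t)"
    unfolding Tprod_Suc_entries A_def C_def w_def by (rule refl)
  have EB: "(\<lambda>t. eB (Tprod \<alpha> v t (Suc n))) = (\<lambda>t. [:w t:] * B t + D t)"
    unfolding Tprod_Suc_entries B_def D_def w_def by (rule refl)
  have EC: "(\<lambda>t. eC (Tprod \<alpha> v t (Suc n))) = (\<lambda>t. ([:c + (w t)^2:] * A t + [:0, 1:] * A t) + [:w t:] * C t)"
    unfolding Tprod_Suc_entries A_def C_def w_def c_def by (simp add: mult_pCons_left)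
  have ED: "(\<lambda>t. eD (Tprod \<alpha> v t (Suc n))) = (\<lambda>t. ([:c + (w t)^2:] * B t + [:0, 1:] * B t) + [:w t:] * D t)"
    unfolding Tprod_Suc_entries B_def D_def w_def c_def by (simp add: mult_pCons_left)
  have MAe: "MA \<alpha> v v' x n = C x - [:(v 1 x)^2 - v' 1 x, 1:] * B x"
    by (simp add: MA_def rS0 B_def C_def)
  have MBe: "MB \<alpha> v v' x n = D x - A x" by (simp add: MB_def A_def D_def)
  have MCe: "MC \<alpha> v v' x n = [:c + (w x)^2 - v' (Suc n) x, 1:] * A x - [:(v 1 x)^2 - v' 1 x, 1:] * D x"
    by (simp add: MC_def rS0 rSn A_def D_def)
  have MDe: "MD \<alpha> v v' x n = [:c + (w x)^2 - v' (Suc n) x, 1:] * B x - C x"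
    by (simp add: MD_def rSn B_def C_def)
  have MA1: "MA \<alpha> v v' x (Suc n) = ([:w x:] * C x + [:c + (w x)^2, 1:] * A x) - [:(v 1 x)^2 - v' 1 x, 1:] * ([:w x:] * B x + D x)"
    by (simp add: MA_def rS0 Tprod_Suc_entries A_def B_def C_def D_def w_def c_def del: Tprod.simps)
  have MB1: "MB \<alpha> v v' x (Suc n) = ([:c + (w x)^2, 1:] * B x + [:w x:] * D x) - ([:w x:] * A x + C x)"
    by (simp add: MB_def Tprod_Suc_entries A_def B_def C_def D_def w_def c_def del: Tprod.simps)
  have MC1: "MC \<alpha> v v' x (Suc n) = [:c + (w x)^2 + v' (Suc n) x, 1:] * ([:w x:] * A x + C x)
        - [:(v 1 x)^2 - v' 1 x, 1:] * ([:c + (w x)^2, 1:] * B x + [:w x:] * D x)"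
    by (simp add: MC_def rS0 rSSn Tprod_Suc_entries A_def B_def C_def D_def w_def c_def del: Tprod.simps)
  have MD1: "MD \<alpha> v v' x (Suc n) = [:c + (w x)^2 + v' (Suc n) x, 1:] * ([:w x:] * B x + D x)
        - ([:c + (w x)^2, 1:] * A x + [:w x:] * C x)"
    by (simp add: MD_def rSSn Tprod_Suc_entries A_def B_def C_def D_def w_def c_def del: Tprod.simps)
  have "cder x (\<lambda>t. eA (Tprod \<alpha> v t (Suc n))) (MA \<alpha> v v' x (Suc n))"
    unfolding EA
    apply (rule cder_cong[OF cder_add[OF cder_cmult[OF wd IA] IC]])
    unfolding MA1 MAe MCe
    apply (subst poly_eq_poly_eq_iff[symmetric])
    apply (rule ext)
    apply (simp add: algebra_simps power2_eq_square)
    done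
  moreover have "cder x (\<lambda>t. eB (Tprod \<alpha> v t (Suc n))) (MB \<alpha> v v' x (Suc n))"
    unfolding EB
    apply (rule cder_cong[OF cder_add[OF cder_cmult[OF wd IB] ID]])
    unfolding MB1 MBe MDe
    apply (subst poly_eq_poly_eq_iff[symmetric])
    apply (rule ext)
    apply (simp add: algebra_simps power2_eq_square)
    done
  moreover have "cder x (\<lambda>t. eC (Tprod \<alpha> v t (Suc n))) (MC \<alpha> v v' x (Suc n))"
    unfolding EC
    apply (rule cder_cong[OF cder_add[OF cder_add[OF cder_cmult[OF w2d IA] cder_X[OF IA]] cder_cmult[OF wd IC]]])
    unfolding MC1 MAe MCe
    apply (subst poly_eq_poly_eq_iff[symmetric])
    apply (rule ext)
    apply (simp add: algebra_simps power2_eq_square)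
    done
  moreover have "cder x (\<lambda>t. eD (Tprod \<alpha> v t (Suc n))) (MD \<alpha> v v' x (Suc n))"
    unfolding ED
    apply (rule cder_cong[OF cder_add[OF cder_add[OF cder_cmult[OF w2d IB] cder_X[OF IB]] cder_cmult[OF wd ID]]])
    unfolding MD1 MBe MDe
    apply (subst poly_eq_poly_eq_iff[symmetric])
    apply (rule ext)
    apply (simp add: algebra_simps power2_eq_square)
    done
  ultimately show ?case by blast
qed



lemma entries_bound:
  "(\<forall>k>n. coeff (eA (Tprod \<alpha> v t n)) k = 0) \<and> (\<forall>k>n. coeff (eB (Tprod \<alpha> v t n)) k = 0) \<and>
   (\<forall>k>n. coeff (eC (Tprod \<alpha> v t n)) k = 0) \<and> (\<forall>k>n. coeff (eD (Tprod \<alpha> v t n)) k = 0)"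
proof (induction n)
  case 0 then show ?case unfolding Tprod_0_entries by simp
next
  case (Suc n) then show ?case unfolding Tprod_Suc_entries by (auto simp: coeff_pCons0)
qed

lemma Apol_eq: "Apol N \<alpha> v t = eA (Tprod \<alpha> v t N)"
  by (cases "Tprod \<alpha> v t N") (simp add: Apol_def Tmat_def eA_def)
lemma Bpol_eq: "Bpol N \<alpha> v t = eB (Tprod \<alpha> v t N)"
  by (cases "Tprod \<alpha> v t N") (simp add: Bpol_def Tmat_def eB_def)
lemma Ppol_eq: "Ppol N \<alpha> v t = eA (Tprod \<alpha> v t N) + eD (Tprod \<alpha> v t N)"
  by (cases "Tprod \<alpha> v t N") (simp add: Ppol_def Tmat_def eA_def eD_def)

definition Rpol :: "nat \<Rightarrow> nat \<Rightarrow> (nat \<Rightarrow> complex) \<Rightarrow> (nat \<Rightarrow> real \<Rightarrow> complex) \<Rightarrow> real \<Rightarrow> complex poly" where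
  "Rpol N g \<alpha> v x = Ppol N \<alpha> v x - (if odd N then 0 else monom 2 (Suc g)) - monom (I0 N g \<alpha> v x) g"

lemma R_struct:
  assumes "g \<ge> 1" "N = 2 * g + 1 \<or> N = 2 * g + 2"
  shows "(\<forall>k\<ge>g. coeff (Rpol N g \<alpha> v x) k = 0) \<and> coeff (Rpol N g \<alpha> v x) (g - 1) = I1 N g \<alpha> v x
     \<and> (\<forall>k>g. coeff (Bpol N \<alpha> v x) k = 0) \<and> coeff (Bpol N \<alpha> v x) g = b0 N v x"
  using assms(2)
proof
  assume N: "N = 2 * g + 1"
  have S: "(\<forall>k>g. coeff (eA (Tprod \<alpha> v x N) + eD (Tprod \<alpha> v x N)) k = 0) \<and>
     coeff (eA (Tprod \<alpha> v x N) + eD (Tprod \<alpha> v x N)) g = 2 * sv v x N \<and>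
     (\<forall>k>g. coeff (eB (Tprod \<alpha> v x N)) k = 0) \<and> coeff (eB (Tprod \<alpha> v x N)) g = 1"
    using struct_odd[OF N] by blast
  have o: "odd N" using N by simp
  have vs: "vsum N v x = sv v x N" by (simp add: vsum_def sv_def)
  show ?thesis
  proof (intro conjI)
    show "\<forall>k\<ge>g. coeff (Rpol N g \<alpha> v x) k = 0"
    proof (intro allI impI)
      fix k assume "g \<le> k"
      then consider "k = g" | "k > g" by linarith
      then show "coeff (Rpol N g \<alpha> v x) k = 0"
        by cases (use S o vs in \<open>simp_all add: Rpol_def Ppol_eq I0_def coeff_monom\<close>)
    qed
    show "coeff (Rpol N g \<alpha> v x) (g - 1) = I1 N g \<alpha> v x"
      using assms(1) o by (simp add: Rpol_def I1_def coeff_monom)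
    show "\<forall>k>g. coeff (Bpol N \<alpha> v x) k = 0" using S by (simp add: Bpol_eq)
    show "coeff (Bpol N \<alpha> v x) g = b0 N v x" using S o by (simp add: Bpol_eq b0_def)
  qed
next
  assume N: "N = 2 * g + 2"
  have S: "(\<forall>k>Suc g. coeff (eA (Tprod \<alpha> v x N) + eD (Tprod \<alpha> v x N)) k = 0) \<and>
     coeff (eA (Tprod \<alpha> v x N) + eD (Tprod \<alpha> v x N)) (Suc g) = 2 \<and>
     coeff (eA (Tprod \<alpha> v x N) + eD (Tprod \<alpha> v x N)) g = (sv v x N)^2 + sb \<alpha> N \<and>
     (\<forall>k>g. coeff (eB (Tprod \<alpha> v x N)) k = 0) \<and> coeff (eB (Tprod \<alpha> v x N)) g = sv v x N"
    using struct_even[OF N] by blast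
  have o: "\<not> odd N" using N by simp
  have vs: "vsum N v x = sv v x N" by (simp add: vsum_def sv_def)
  have sbN: "sb \<alpha> N = (\<Sum>n=1..2*g+1. beta \<alpha> n)" using N by (simp add: sb_def)
  show ?thesis
  proof (intro conjI)
    show "\<forall>k\<ge>g. coeff (Rpol N g \<alpha> v x) k = 0"
    proof (intro allI impI)
      fix k assume "g \<le> k"
      then consider "k = g" | "k = Suc g" | "k > Suc g" by linarith
      then show "coeff (Rpol N g \<alpha> v x) k = 0"
        by cases (use S o vs sbN in \<open>simp_all add: Rpol_def Ppol_eq I0_def coeff_monom\<close>)
    qed
    show "coeff (Rpol N g \<alpha> v x) (g - 1) = I1 N g \<alpha> v x"
      using assms(1) o by (auto simp: Rpol_def I1_def coeff_monom)
    show "\<forall>k>g. coeff (Bpol N \<alpha> v x) k = 0" using S by (simp add: Bpol_eq)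
    show "coeff (Bpol N \<alpha> v x) g = b0 N v x" using S o vs by (simp add: Bpol_eq b0_def)
  qed
qed

lemma poly_Rpol:
  "poly (Rpol N g \<alpha> v x) y = poly (Ppol N \<alpha> v x) y - (if odd N then 0 else 2 * y ^ (g + 1)) - I0 N g \<alpha> v x * y ^ g"
  by (simp add: Rpol_def poly_monom)

definition hterm where
  "hterm N g \<alpha> v x L Z i = (Z i + Qfun N \<alpha> (L i) / Z i
                  - (if odd N then 0 else 2 * L i ^ (g + 1))
                  - I0 N g \<alpha> v x * L i ^ g)
               / (b0 N v x * (\<Prod>k\<in>{1..g} - {i}. (L i - L k)))"

lemma zfin_alg:
  fixes C Z D den a' d' :: complex
  assumes "den \<noteq> 0" "Z \<noteq> 0"
  shows "C + (Z - D) / den * a' = - Z * (((Z * d' + D * a' - den * C) / Z - (a' + d')) / den)"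
  using assms by (simp add: field_simps)

lemma dz_deriv:
  fixes c0 q e den z :: complex
  assumes "z \<noteq> 0"
  shows "((\<lambda>w. c0 + (w + q / w - e) / den) has_field_derivative (1 - q / z^2) / den) (at z)"
proof -
  have "((\<lambda>w. q / w) has_field_derivative - q / z^2) (at z)"
    using DERIV_divide[OF DERIV_const[of q "at z"] DERIV_ident] assms
    by (simp add: power2_eq_square)
  then have "((\<lambda>w. w + q / w - e) has_field_derivative 1 + (- q / z^2) - 0) (at z)"
    by (intro DERIV_diff DERIV_add DERIV_ident DERIV_const)
  then have "((\<lambda>w. (w + q / w - e) / den) has_field_derivative (1 + (- q / z^2) - 0) / den) (at z)"
    by (rule DERIV_cdivide)
  then have "((\<lambda>w. c0 + (w + q / w - e) / den) has_field_derivative 0 + (1 + (- q / z^2) - 0) / den) (at z)"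
    by (intro DERIV_add DERIV_const)
  then show ?thesis by simp
qed


lemma Ham_hterm: "Ham N g \<alpha> v x L Z = (\<Sum>i\<in>{1..g}. hterm N g \<alpha> v x L Z i)"
  by (simp add: Ham_def hterm_def)



lemma main_at:
  fixes N g :: nat and \<alpha> :: "nat \<Rightarrow> complex"
    and v v' :: "nat \<Rightarrow> real \<Rightarrow> complex"
    and I :: "real set"
    and lam :: "nat \<Rightarrow> real \<Rightarrow> complex"
  assumes g_pos: "g \<ge> 1"
    and N_def: "N = 2 * g + 1 \<or> N = 2 * g + 2"
    and I_open: "open I"
    and v_deriv: "\<forall>n. \<forall>x\<in>I. (v n has_vector_derivative v' n x) (at x)"
    and chain: "\<forall>n. \<forall>x\<in>I. v' n x + v' (Suc n) x
                   = (v (Suc n) x)^2 - (v n x)^2 + \<alpha> n"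
    and lam_cont: "\<forall>j\<in>{1..g}. continuous_on I (lam j)"
    and B_nz: "\<forall>x\<in>I. Bpol N \<alpha> v x \<noteq> 0"
    and lam_zero: "\<forall>x\<in>I. \<forall>j\<in>{1..g}. poly (Bpol N \<alpha> v x) (lam j x) = 0"
    and lam_dist: "\<forall>x\<in>I. \<forall>j\<in>{1..g}. \<forall>k\<in>{1..g}. j \<noteq> k \<longrightarrow> lam j x \<noteq> lam k x"
    and z_nz: "\<forall>x\<in>I. \<forall>j\<in>{1..g}. poly (Apol N \<alpha> v x) (lam j x) \<noteq> 0"
    and x: "x \<in> I"
  shows "Ham N g \<alpha> v x (\<lambda>j. lam j x) (\<lambda>j. poly (Apol N \<alpha> v x) (lam j x))
        = I1 N g \<alpha> v x / b0 N v x
   \<and> (\<forall>j\<in>{1..g}.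
        (lam j has_vector_derivative
           (poly (Apol N \<alpha> v x) (lam j x)
            * dHdz N g \<alpha> v x (\<lambda>k. lam k x) (\<lambda>k. poly (Apol N \<alpha> v x) (lam k x)) j)) (at x)
      \<and> ((\<lambda>t. poly (Apol N \<alpha> v t) (lam j t)) has_vector_derivative
           (- poly (Apol N \<alpha> v x) (lam j x)
            * dHdl N g \<alpha> v x (\<lambda>k. lam k x) (\<lambda>k. poly (Apol N \<alpha> v x) (lam k x)) j)) (at x))"
proof -
  define L where "L = (\<lambda>k. lam k x)"
  define Z where "Z = (\<lambda>k. poly (Apol N \<alpha> v x) (lam k x))"
  define Ax where "Ax = eA (Tprod \<alpha> v x N)"
  define Bx where "Bx = eB (Tprod \<alpha> v x N)"
  define Cx where "Cx = eC (Tprod \<alpha> v x N)"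
  define Dx where "Dx = eD (Tprod \<alpha> v x N)"
  define Px where "Px = Ppol N \<alpha> v x"
  define Rx where "Rx = Rpol N g \<alpha> v x"
  define b where "b = b0 N v x"
  define Qp where "Qp = (\<Prod>k<N. - [:beta \<alpha> k, 1:])"
  have N1: "N \<ge> 1" using N_def by auto
  have Apx: "Apol N \<alpha> v x = Ax" by (simp add: Apol_eq Ax_def)
  have Bpx: "Bpol N \<alpha> v x = Bx" by (simp add: Bpol_eq Bx_def)
  have Pxe: "Px = Ax + Dx" by (simp add: Px_def Ppol_eq Ax_def Dx_def)
  have Zd: "Z = (\<lambda>k. poly Ax (L k))" by (simp add: Z_def L_def Apx)
  have Qf: "Qfun N \<alpha> = poly Qp" using poly_Qprod[OF N1] by (simp add: Qp_def fun_eq_iff)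
  have det: "Ax * Dx - Bx * Cx = Qp" unfolding Ax_def Bx_def Cx_def Dx_def Qp_def by (rule det_Tprod)
  have inj: "inj_on L {1..g}" using lam_dist x by (auto simp: inj_on_def L_def)
  have RS: "(\<forall>k\<ge>g. coeff Rx k = 0) \<and> coeff Rx (g - 1) = I1 N g \<alpha> v x
     \<and> (\<forall>k>g. coeff Bx k = 0) \<and> coeff Bx g = b"
    using R_struct[OF g_pos N_def, of \<alpha> v x] by (simp add: Rx_def Bpx b_def)
  have Broots: "\<forall>j\<in>{1..g}. poly Bx (L j) = 0" using lam_zero x unfolding Bpx[symmetric] L_def by blast
  have Bfac: "Bx = smult b (\<Prod>k\<in>{1..g}. [:-L k, 1:])"
    using factor[of g Bx b L] RS inj Broots by blast
  have bnz: "b \<noteq> 0" using B_nz x Bfac by (auto simp: Bpx)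
  have Znz: "\<forall>j\<in>{1..g}. Z j \<noteq> 0" using z_nz x by (simp add: Z_def)
  have Dval: "poly Dx (L j) = Qfun N \<alpha> (L j) / Z j" if j: "j \<in> {1..g}" for j
  proof -
    have "poly (Ax * Dx - Bx * Cx) (L j) = poly Qp (L j)" by (simp add: det)
    then have "Z j * poly Dx (L j) = Qfun N \<alpha> (L j)" using Broots j by (simp add: Zd Qf)
    then show ?thesis using Znz j by (simp add: field_simps)
  qed
  have num: "Z i + Qfun N \<alpha> (L i) / Z i - (if odd N then 0 else 2 * L i ^ (g + 1)) - I0 N g \<alpha> v x * L i ^ g
      = poly Rx (L i)" if i: "i \<in> {1..g}" for i
    using Dval[OF i] by (simp add: Rx_def poly_Rpol Px_def[symmetric] Pxe Zd)
  have Hval: "Ham N g \<alpha> v x L Z = I1 N g \<alpha> v x / b"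
  proof -
    have "Ham N g \<alpha> v x L Z = (\<Sum>i\<in>{1..g}. poly Rx (L i) / (\<Prod>k\<in>{1..g}-{i}. (L i - L k)) / b)"
      unfolding Ham_def b_def by (rule sum.cong) (simp_all add: num)
    also have "\<dots> = (\<Sum>i\<in>{1..g}. poly Rx (L i) / (\<Prod>k\<in>{1..g}-{i}. (L i - L k))) / b"
      by (simp add: sum_divide_distrib)
    also have "\<dots> = I1 N g \<alpha> v x / b" using lagrange[of g Rx L] RS inj g_pos by simp
    finally show ?thesis .
  qed
  have vd: "\<And>n. (v n has_vector_derivative v' n x) (at x)" using v_deriv x by blast
  have ch: "\<And>n. v' n x + v' (Suc n) x = (v (Suc n) x)^2 - (v n x)^2 + \<alpha> n" using chain x by blast
  have TD: "cder x (\<lambda>t. eA (Tprod \<alpha> v t N)) (MA \<alpha> v v' x N) \<and>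
         cder x (\<lambda>t. eB (Tprod \<alpha> v t N)) (MB \<alpha> v v' x N)"
    using Tder[of v v' x \<alpha> N, OF vd ch] by blast
  have cA: "cder x (\<lambda>t. eA (Tprod \<alpha> v t N)) (Cx - [:rS \<alpha> v v' x 0, 1:] * Bx)"
    using TD by (simp add: MA_def Cx_def Bx_def)
  have cB: "cder x (\<lambda>t. eB (Tprod \<alpha> v t N)) (Dx - Ax)"
    using TD by (simp add: MB_def Dx_def Ax_def)
  have bdA: "\<forall>t. \<forall>k>N. coeff (eA (Tprod \<alpha> v t N)) k = 0" using entries_bound by blast
  have bdB: "\<forall>t. \<forall>k>N. coeff (eB (Tprod \<alpha> v t N)) k = 0" using entries_bound by blast
  have Ham_z: "Ham N g \<alpha> v x L Z = I1 N g \<alpha> v x / b0 N v x" using Hval by (simp add: b_def)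
  have main_j: "(lam j has_vector_derivative Z j * dHdz N g \<alpha> v x L Z j) (at x)
      \<and> ((\<lambda>t. poly (Apol N \<alpha> v t) (lam j t)) has_vector_derivative (- Z j * dHdl N g \<alpha> v x L Z j)) (at x)"
    if j: "j \<in> {1..g}" for j
  proof -
    define qj where "qj = smult b (\<Prod>k\<in>{1..g}-{j}. [:-L k, 1:])"
    define den where "den = b * (\<Prod>k\<in>{1..g}-{j}. (L j - L k))"
    have pr: "(\<Prod>k\<in>{1..g}. [:-L k, 1:]) = [:-L j, 1:] * (\<Prod>k\<in>{1..g}-{j}. [:-L k, 1:])"
      by (rule prod.remove[OF _ j]) simp
    have Bsplit: "Bx = [:-L j, 1:] * qj"
      unfolding Bfac qj_def pr by (simp only: mult_smult_right)
    have qjL: "poly qj (L j) = den" by (simp add: qj_def den_def poly_prod)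
    have qjw: "poly qj w = b * (\<Prod>k\<in>{1..g}-{j}. (w - L k))" for w by (simp add: qj_def poly_prod)
    have dennz: "den \<noteq> 0"
    proof -
      have "L j - L k \<noteq> 0" if "k \<in> {1..g}-{j}" for k
        using that j inj inj_on_contraD[of L "{1..g}" j k] by auto
      then show ?thesis unfolding den_def using bnz by (simp add: prod_zero_iff)
    qed
    have polyB: "poly Bx y = (y - L j) * poly qj y" for y by (simp add: Bsplit algebra_simps)
    have Bder: "poly (pderiv Bx) (L j) = den"
      unfolding Bsplit pderiv_mult by (simp add: pderiv_pCons qjL)
    have Zj: "Z j \<noteq> 0" using Znz j by blast
    have BL: "poly Bx (L j) = 0" using Broots j by blast
    have lcont: "(lam j \<longlongrightarrow> lam j x) (at x)"
      using lam_cont j I_open x by (simp add: continuous_on_eq_continuous_at isCont_def)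
    have hB: "((\<lambda>t. poly (eB (Tprod \<alpha> v t N)) (lam j t) - poly Bx (lam j t)) has_vector_derivative
               poly (Dx - Ax) (L j)) (at x)"
      using cder_poly[OF cB bdB lcont] by (simp add: Bx_def L_def)
    define lp where "lp = (poly Ax (L j) - poly Dx (L j)) / den"
    have lamd: "(lam j has_vector_derivative lp) (at x)"
    proof -
      define h where "h t = poly (eB (Tprod \<alpha> v t N)) (lam j t) - poly Bx (lam j t)" for t
      have hx: "h x = 0" by (simp add: h_def Bx_def)
      have hq: "((\<lambda>t. (h t - h x) / of_real (t - x)) \<longlongrightarrow> poly (Dx - Ax) (L j)) (at x)"
        using hB unfolding hvd_iff h_def[abs_def] .
      have phi: "((\<lambda>t. poly qj (lam j t)) \<longlongrightarrow> den) (at x)"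
        using tendsto_poly[OF lcont, of qj] qjL by (simp add: L_def)
      have lim: "((\<lambda>t. - ((h t - h x) / of_real (t - x)) / poly qj (lam j t)) \<longlongrightarrow> - poly (Dx - Ax) (L j) / den) (at x)"
        using hq phi dennz by (intro tendsto_intros) auto
      have ev1: "\<forall>\<^sub>F t in at x. poly qj (lam j t) \<noteq> 0" using tendsto_imp_eventually_ne[OF phi dennz] .
      have ev2: "\<forall>\<^sub>F t in at x. t \<in> I" using eventually_at_in_open'[OF I_open x] .
      have ev: "\<forall>\<^sub>F t in at x. - ((h t - h x) / of_real (t - x)) / poly qj (lam j t) = (lam j t - lam j x) / of_real (t - x)"
        using ev1 ev2
      proof eventually_elim
        case (elim t)
        have "poly (eB (Tprod \<alpha> v t N)) (lam j t) = 0" using lam_zero elim(2) j by (simp add: Bpol_eq)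
        then have ht: "h t = - ((lam j t - lam j x) * poly qj (lam j t))" by (simp add: h_def polyB L_def)
        have "- ((h t - h x) / of_real (t - x)) / poly qj (lam j t)
            = ((lam j t - lam j x) * poly qj (lam j t)) / (of_real (t - x) * poly qj (lam j t))"
          by (simp add: ht hx divide_divide_eq_left)
        also have "\<dots> = (lam j t - lam j x) / of_real (t - x)"
          using elim(1) by (rule nonzero_mult_divide_mult_cancel_right)
        finally show ?case .
      qed
      have l2: "((\<lambda>t. (lam j t - lam j x) / of_real (t - x)) \<longlongrightarrow> - poly (Dx - Ax) (L j) / den) (at x)"
        by (rule Lim_transform_eventually[OF lim ev])
      have "- poly (Dx - Ax) (L j) / den = lp" by (simp add: lp_def)
      then have "((\<lambda>t. (lam j t - lam j x) / of_real (t - x)) \<longlongrightarrow> lp) (at x)" using l2 by simp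
      then show ?thesis unfolding hvd_iff .
    qed
    have dz: "dHdz N g \<alpha> v x L Z j = (1 - Qfun N \<alpha> (L j) / (Z j)^2) / den"
    proof -
      define c0 where "c0 = (\<Sum>i\<in>{1..g}-{j}. hterm N g \<alpha> v x L Z i)"
      define e where "e = (if odd N then 0 else 2 * L j ^ (g + 1)) + I0 N g \<alpha> v x * L j ^ g"
      have eq: "Ham N g \<alpha> v x L (Z(j := w)) = c0 + (w + Qfun N \<alpha> (L j) / w - e) / den" for w
      proof -
        have "Ham N g \<alpha> v x L (Z(j := w)) = hterm N g \<alpha> v x L (Z(j := w)) j + (\<Sum>i\<in>{1..g}-{j}. hterm N g \<alpha> v x L (Z(j := w)) i)"
          unfolding Ham_hterm by (rule sum.remove) (use j in auto)
        also have "(\<Sum>i\<in>{1..g}-{j}. hterm N g \<alpha> v x L (Z(j := w)) i) = c0"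
          unfolding c0_def by (rule sum.cong) (auto simp: hterm_def)
        also have "hterm N g \<alpha> v x L (Z(j := w)) j = (w + Qfun N \<alpha> (L j) / w - e) / den"
          by (simp add: hterm_def e_def den_def b_def algebra_simps)
        finally show ?thesis by (simp only: add.commute)
      qed
      have "((\<lambda>w. c0 + (w + Qfun N \<alpha> (L j) / w - e) / den) has_field_derivative (1 - Qfun N \<alpha> (L j) / (Z j)^2) / den) (at (Z j))"
        by (rule dz_deriv[OF Zj])
      then show ?thesis unfolding dHdz_def eq by (rule DERIV_imp_deriv)
    qed
    have lamfinal: "lp = Z j * dHdz N g \<alpha> v x L Z j"
      unfolding dz lp_def using Dval[OF j] Zj dennz by (simp add: Zd field_simps power2_eq_square)
    define Ej where "Ej w = Z j + poly Qp w / Z j - poly Px w" for w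
    have dl: "dHdl N g \<alpha> v x L Z j = (poly (pderiv Qp) (L j) / Z j - poly (pderiv Px) (L j)) / den"
    proof -
      define S where "S = - (L ` ({1..g}-{j}))"
      have Sopen: "open S" unfolding S_def by (intro open_Compl finite_imp_closed) auto
      have LS: "L j \<in> S"
      proof -
        have "L j \<notin> L ` ({1..g}-{j})"
        proof
          assume "L j \<in> L ` ({1..g}-{j})"
          then obtain k where k: "k \<in> {1..g}-{j}" "L j = L k" by blast
          then have "j = k" using inj j inj_onD[of L "{1..g}" j k] by auto
          with k show False by auto
        qed
        then show ?thesis unfolding S_def by blast
      qed
      have eq: "Ham N g \<alpha> v x (L(j := w)) Z = I1 N g \<alpha> v x / b + Ej w / poly qj w" if w: "w \<in> S" for w
      proof -
        define L' where "L' = L(j := w)"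
        have inj': "inj_on L' {1..g}"
        proof (unfold inj_on_def, intro ballI impI)
          fix a c assume a: "a \<in> {1..g}" and c: "c \<in> {1..g}" and ac: "L' a = L' c"
          have wn: "w \<noteq> L k" if "k \<in> {1..g}-{j}" for k using w that unfolding S_def by blast
          show "a = c"
          proof (cases "a = j"; cases "c = j")
            assume "a = j" "c = j" then show ?thesis by simp
          next
            assume h: "a = j" "c \<noteq> j"
            then have "w = L c" using ac by (simp add: L'_def)
            moreover have "c \<in> {1..g}-{j}" using h c by blast
            ultimately show ?thesis using wn by blast
          next
            assume h: "a \<noteq> j" "c = j"
            then have "w = L a" using ac by (simp add: L'_def)
            moreover have "a \<in> {1..g}-{j}" using h a by blast
            ultimately show ?thesis using wn by blast
          next
            assume h: "a \<noteq> j" "c \<noteq> j"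
            then have "L a = L c" using ac by (simp add: L'_def)
            then show ?thesis using inj a c inj_onD by metis
          qed
        qed
        have ht: "hterm N g \<alpha> v x L' Z i = poly Rx (L' i) / (\<Prod>k\<in>{1..g}-{i}. (L' i - L' k)) / b
               + (if i = j then Ej w / poly qj w else 0)" if i: "i \<in> {1..g}" for i
        proof (cases "i = j")
          case True
          have L'j: "L' j = w" by (simp add: L'_def)
          have pr': "(\<Prod>k\<in>{1..g}-{j}. (w - L' k)) = (\<Prod>k\<in>{1..g}-{j}. (w - L k))"
            by (rule prod.cong) (auto simp: L'_def)
          have numj: "Z j + Qfun N \<alpha> w / Z j - (if odd N then 0 else 2 * w ^ (g + 1)) - I0 N g \<alpha> v x * w ^ g
              = poly Rx w + Ej w"
            unfolding Rx_def poly_Rpol Ej_def Px_def Qf by (simp add: algebra_simps)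
          have "hterm N g \<alpha> v x L' Z j = (poly Rx w + Ej w) / (b * (\<Prod>k\<in>{1..g}-{j}. (w - L k)))"
            unfolding hterm_def L'j pr' numj b_def by (rule refl)
          also have "\<dots> = (poly Rx w + Ej w) / poly qj w" by (simp add: qjw)
          also have "\<dots> = poly Rx w / poly qj w + Ej w / poly qj w" by (rule add_divide_distrib)
          also have "poly Rx w / poly qj w = poly Rx (L' j) / (\<Prod>k\<in>{1..g}-{j}. (L' j - L' k)) / b"
            unfolding L'j pr' qjw by (simp add: divide_divide_eq_left mult.commute)
          finally show ?thesis using True by simp
        next
          case False
          have L'i: "L' i = L i" using False by (simp add: L'_def)
          have "hterm N g \<alpha> v x L' Z i = poly Rx (L i) / (b * (\<Prod>k\<in>{1..g}-{i}. (L i - L' k)))"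
            unfolding hterm_def L'i num[OF i] b_def by (rule refl)
          then show ?thesis using False by (simp add: L'i divide_divide_eq_left mult.commute)
        qed
        have "Ham N g \<alpha> v x L' Z = (\<Sum>i\<in>{1..g}. poly Rx (L' i) / (\<Prod>k\<in>{1..g}-{i}. (L' i - L' k)) / b
               + (if i = j then Ej w / poly qj w else 0))"
          unfolding Ham_hterm by (rule sum.cong) (simp_all add: ht)
        also have "\<dots> = (\<Sum>i\<in>{1..g}. poly Rx (L' i) / (\<Prod>k\<in>{1..g}-{i}. (L' i - L' k))) / b + Ej w / poly qj w"
          using j by (simp add: sum.distrib sum_divide_distrib)
        also have "\<dots> = I1 N g \<alpha> v x / b + Ej w / poly qj w"
          using lagrange[of g Rx L'] RS inj' g_pos by simp
        finally show ?thesis by (simp add: L'_def)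
      qed
      have E0: "Ej (L j) = 0"
        using Dval[OF j] Zj by (simp add: Ej_def Pxe Zd Qf field_simps)
      have "((\<lambda>w. I1 N g \<alpha> v x / b + Ej w / poly qj w) has_field_derivative
              (poly (pderiv Qp) (L j) / Z j - poly (pderiv Px) (L j)) / den) (at (L j))"
      proof -
        have dE: "(Ej has_field_derivative poly (pderiv Qp) (L j) / Z j - poly (pderiv Px) (L j)) (at (L j))"
          unfolding Ej_def[abs_def] using Zj by (auto intro!: derivative_eq_intros)
        have dq: "((\<lambda>w. poly qj w) has_field_derivative poly (pderiv qj) (L j)) (at (L j))" by simp
        have "((\<lambda>w. Ej w / poly qj w) has_field_derivative
                ((poly (pderiv Qp) (L j) / Z j - poly (pderiv Px) (L j)) * poly qj (L j) - Ej (L j) * poly (pderiv qj) (L j))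
                / (poly qj (L j) * poly qj (L j))) (at (L j))"
          using DERIV_divide[OF dE dq] qjL dennz by simp
        then have "((\<lambda>w. Ej w / poly qj w) has_field_derivative
              (poly (pderiv Qp) (L j) / Z j - poly (pderiv Px) (L j)) / den) (at (L j))"
          using E0 qjL dennz by simp
        then show ?thesis using DERIV_add[OF DERIV_const[of "I1 N g \<alpha> v x / b" "at (L j)"]] by simp
      qed
      then have "((\<lambda>w. Ham N g \<alpha> v x (L(j := w)) Z) has_field_derivative
              (poly (pderiv Qp) (L j) / Z j - poly (pderiv Px) (L j)) / den) (at (L j))"
        by (rule has_field_derivative_transform_within_open[OF _ Sopen LS]) (simp add: eq)
      then show ?thesis unfolding dHdl_def by (rule DERIV_imp_deriv)
    qed
    have hA: "((\<lambda>t. poly (eA (Tprod \<alpha> v t N)) (lam j t) - poly Ax (lam j t)) has_vector_derivative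
               poly Cx (L j)) (at x)"
      using cder_poly[OF cA bdA lcont] BL by (simp add: Ax_def L_def)
    have hC: "((\<lambda>t. poly Ax (lam j t)) has_vector_derivative lp * poly (pderiv Ax) (L j)) (at x)"
      using field_vector_diff_chain_at[OF lamd poly_DERIV[of Ax "lam j x"]] by (simp add: o_def L_def)
    have zd: "((\<lambda>t. poly (Apol N \<alpha> v t) (lam j t)) has_vector_derivative poly Cx (L j) + lp * poly (pderiv Ax) (L j)) (at x)"
      using has_vector_derivative_add[OF hA hC] by (simp add: Apol_eq)
    have Qd: "poly (pderiv Qp) (L j) = Z j * poly (pderiv Dx) (L j) + poly Dx (L j) * poly (pderiv Ax) (L j) - den * poly Cx (L j)"
      unfolding det[symmetric] using BL Bder by (simp add: pderiv_mult pderiv_diff Zd algebra_simps)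
    have zfinal: "poly Cx (L j) + lp * poly (pderiv Ax) (L j) = - Z j * dHdl N g \<alpha> v x L Z j"
    proof -
      have PxD: "poly (pderiv Px) (L j) = poly (pderiv Ax) (L j) + poly (pderiv Dx) (L j)" by (simp add: Pxe pderiv_add)
      have AZ: "poly Ax (L j) = Z j" by (simp add: Zd)
      show ?thesis unfolding dl lp_def Qd PxD AZ by (rule zfin_alg[OF dennz Zj])
    qed
    show ?thesis using lamd lamfinal zd zfinal by simp
  qed
  show ?thesis using Ham_z main_j unfolding L_def Z_def by blast
qed

theorem mainTheorem2:
  fixes N g :: nat and \<alpha> :: "nat \<Rightarrow> complex"
    and v v' :: "nat \<Rightarrow> real \<Rightarrow> complex"
    and I :: "real set"
    and lam :: "nat \<Rightarrow> real \<Rightarrow> complex"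
  assumes g_pos: "g \<ge> 1"
    and N_def: "N = 2 * g + 1 \<or> N = 2 * g + 2"
    and \<alpha>_per: "\<forall>n. \<alpha> (n + N) = \<alpha> n"
    and v_per: "\<forall>n. v (n + N) = v n"
    and I_open: "open I"
    and v_deriv: "\<forall>n. \<forall>x\<in>I. (v n has_vector_derivative v' n x) (at x)"
    and chain: "\<forall>n. \<forall>x\<in>I. v' n x + v' (Suc n) x
                   = (v (Suc n) x)^2 - (v n x)^2 + \<alpha> n"
    and lam_cont: "\<forall>j\<in>{1..g}. continuous_on I (lam j)"
    and B_nz: "\<forall>x\<in>I. Bpol N \<alpha> v x \<noteq> 0"
    and lam_zero: "\<forall>x\<in>I. \<forall>j\<in>{1..g}. poly (Bpol N \<alpha> v x) (lam j x) = 0"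
    and lam_dist: "\<forall>x\<in>I. \<forall>j\<in>{1..g}. \<forall>k\<in>{1..g}. j \<noteq> k \<longrightarrow> lam j x \<noteq> lam k x"
    and z_nz: "\<forall>x\<in>I. \<forall>j\<in>{1..g}. poly (Apol N \<alpha> v x) (lam j x) \<noteq> 0"
  shows "\<forall>x\<in>I.
     Ham N g \<alpha> v x (\<lambda>j. lam j x) (\<lambda>j. poly (Apol N \<alpha> v x) (lam j x))
        = I1 N g \<alpha> v x / b0 N v x
   \<and> (\<forall>j\<in>{1..g}.
        (lam j has_vector_derivative
           (poly (Apol N \<alpha> v x) (lam j x)
            * dHdz N g \<alpha> v x (\<lambda>k. lam k x) (\<lambda>k. poly (Apol N \<alpha> v x) (lam k x)) j)) (at x)
      \<and> ((\<lambda>t. poly (Apol N \<alpha> v t) (lam j t)) has_vector_derivative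
           (- poly (Apol N \<alpha> v x) (lam j x)
            * dHdl N g \<alpha> v x (\<lambda>k. lam k x) (\<lambda>k. poly (Apol N \<alpha> v x) (lam k x)) j)) (at x))"
  using main_at[OF g_pos N_def I_open v_deriv chain lam_cont B_nz lam_zero lam_dist z_nz] by blast

end
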